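(* Let $\mathbf i\in\mathsf L^+$ and $\mathbf j\in\mathsf W^+$ with $\mathbf i\ge\mathbf j$, and assume $\mathbf i\neq\mathbf j$ if $|\mathbf i|$ is isotropic odd (i.e. $p(|\mathbf i|)=1$ and $(|\mathbf i|,|\mathbf i|)=0$). Then the concatenation $\mathbf i\mathbf j$ is dominant, i.e. $\mathbf i\mathbf j\in\mathsf W^+$.
   Context: Let $\mathfrak g$ be a basic Lie superalgebra with a fixed simple system $\Pi=\{\alpha_i\mid i\in I\}$, parity $p(i)\in\{0,1\}$, $Q^+=\bigoplus\mathbb Z_{\ge0}\alpha_i$ with parity $p(\sum c_i\alpha_i)=\sum c_ip(i)\bmod 2$, and $(\cdot,\cdot)$ the symmetric bilinear form with $(\alpha_i,\alpha_j)=d_ia_{ij}$ (symmetrized Cartan matrix). $\pi:=-1$, $q$ an indeterminate. $U_q$ is the positive half of the associated quantum supergroup (generated by $e_i$ of degree $\alpha_i$, parity $p(i)$). $\mathsf F$: the free associative $\mathbb Q(q)$-algebra on $I$ with basis the words $\mathbf i=(i_1,\dots,i_d)$, weight $|\mathbf i|=\sum\alpha_{i_s}$, parity $\sum p(i_s)$. Quantum shuffle product: $x\star\emptyset=\emptyset\star x=x$, $(xi)\star(yj)=(x\star(yj))i+\pi^{(p(x)+p(i))p(j)}q^{-(|x|+\alpha_i,\alpha_j)}((xi)\star y)j$ (homogeneous $x,y$, letters $i,j$, juxtaposition = concatenation). There is an injective algebra homomorphism $\Psi:U_q\to(\mathsf F,\star)$ with $\Psi(e_i)=i$; $\mathsf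 U:=\Psi(U_q)$ is the subalgebra generated by the letters. Fix a total order on $I$; order words lexicographically ($\mathbf i<\mathbf j$ if $\mathbf i$ is a proper prefix of $\mathbf j$ or at the first differing position $s$, $i_s<j_s$). $\max(x)$ is the largest word with nonzero coefficient in $x\neq0$. A word is dominant if it equals $\max(u)$ for some $u\in\mathsf U$; $\mathsf W^+$ is the set of dominant words. A nonempty word is Lyndon if it is smaller than all its proper right factors; $\mathsf L^+$ is the set of dominant Lyndon words. *)

theory Defs
  imports "HOL-Computational_Algebra.Polynomial" "HOL-Computational_Algebra.Fraction_Field"
begin

text \<open>Parity p :: 'i => bool (True = odd).
  Symmetrized Cartan matrix B i j = (alpha_i, alpha_j) :: int.\<close>

type_synonym qfield = "rat poly fract"

definition qvar :: qfield where
  "qvar = Fract [:0, 1:] 1"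

text \<open>Conditions on the Cartan datum satisfied by the symmetrized Cartan matrix of a
  basic Lie superalgebra with simple system.\<close>
definition super_cartan_datum :: "('i \<Rightarrow> bool) \<Rightarrow> ('i \<Rightarrow> 'i \<Rightarrow> int) \<Rightarrow> bool" where
  "super_cartan_datum p B \<longleftrightarrow>
     (\<forall>i j. B i j = B j i) \<and>
     (\<forall>i. B i i = 0 \<longrightarrow> p i) \<and>
     (\<forall>i j. B i i \<noteq> 0 \<and> i \<noteq> j \<longrightarrow>
        (\<exists>n::int. n \<le> 0 \<and> 2 * B i j = n * B i i \<and> (p i \<longrightarrow> even n)))"

text \<open>Elements of F: functions from words to Q(q) (finitely supported in practice).\<close>
type_synonym 'i felem = "'i list \<Rightarrow> qfield"

definition word_vec :: "'i list \<Rightarrow> 'i felem" where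
  "word_vec w = (\<lambda>v. if v = w then 1 else 0)"

text \<open>right multiplication (concatenation) by a letter, extended linearly\<close>
definition app_letter :: "'i felem \<Rightarrow> 'i \<Rightarrow> 'i felem" where
  "app_letter f i = (\<lambda>v. if v \<noteq> [] \<and> last v = i then f (butlast v) else 0)"

text \<open>number of odd letters in a word; parity of a word = parity of this number\<close>
definition nodd :: "('i \<Rightarrow> bool) \<Rightarrow> 'i list \<Rightarrow> nat" where
  "nodd p w = length (filter p w)"

definition form_wt_letter :: "('i \<Rightarrow> 'i \<Rightarrow> int) \<Rightarrow> 'i list \<Rightarrow> 'i \<Rightarrow> int" where
  "form_wt_letter B w j = sum_list (map (\<lambda>k. B k j) w)"

definition form_wt :: "('i \<Rightarrow> 'i \<Rightarrow> int) \<Rightarrow> 'i list \<Rightarrow> 'i list \<Rightarrow> int" where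
  "form_wt B w w' = sum_list (map (\<lambda>k. form_wt_letter B w k) w')"

text \<open>Quantum shuffle of two words, computed on the reversed words (so the recursion
  peels off last letters): shr (rev x) (rev y) = x * y.
  (x i) * (y j) = (x * (y j)) i + (-1)^((p(x)+p(i)) p(j)) q^(-(|x|+alpha_i, alpha_j)) ((x i) * y) j.\<close>
fun shr :: "('i \<Rightarrow> bool) \<Rightarrow> ('i \<Rightarrow> 'i \<Rightarrow> int) \<Rightarrow> 'i list \<Rightarrow> 'i list \<Rightarrow> 'i felem" where
  "shr p B [] ys = word_vec (rev ys)"
| "shr p B xs [] = word_vec (rev xs)"
| "shr p B (i # xs) (j # ys) =
     (\<lambda>v. app_letter (shr p B xs (j # ys)) i v
        + (if odd (nodd p (i # xs)) \<and> p j then -1 else 1)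
          * power_int qvar (- form_wt_letter B (i # xs) j)
          * app_letter (shr p B (i # xs) ys) j v)"

definition shuffle_word :: "('i \<Rightarrow> bool) \<Rightarrow> ('i \<Rightarrow> 'i \<Rightarrow> int) \<Rightarrow> 'i list \<Rightarrow> 'i list \<Rightarrow> 'i felem" where
  "shuffle_word p B x y = shr p B (rev x) (rev y)"

definition supp :: "'i felem \<Rightarrow> 'i list set" where
  "supp f = {w. f w \<noteq> 0}"

definition shuffle :: "('i \<Rightarrow> bool) \<Rightarrow> ('i \<Rightarrow> 'i \<Rightarrow> int) \<Rightarrow> 'i felem \<Rightarrow> 'i felem \<Rightarrow> 'i felem" where
  "shuffle p B f g = (\<lambda>w. \<Sum>x\<in>supp f. \<Sum>y\<in>supp g. f x * g y * shuffle_word p B x y w)"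

inductive_set Ualg :: "('i \<Rightarrow> bool) \<Rightarrow> ('i \<Rightarrow> 'i \<Rightarrow> int) \<Rightarrow> 'i felem set"
  for p B where
  unit: "word_vec [] \<in> Ualg p B"
| letter: "word_vec [i] \<in> Ualg p B"
| add: "f \<in> Ualg p B \<Longrightarrow> g \<in> Ualg p B \<Longrightarrow> (\<lambda>w. f w + g w) \<in> Ualg p B"
| smult: "f \<in> Ualg p B \<Longrightarrow> (\<lambda>w. c * f w) \<in> Ualg p B"
| mult: "f \<in> Ualg p B \<Longrightarrow> g \<in> Ualg p B \<Longrightarrow> shuffle p B f g \<in> Ualg p B"

text \<open>lexicographic order on words: proper prefix is smaller\<close>
definition word_less :: "'i::linorder list \<Rightarrow> 'i list \<Rightarrow> bool" where
  "word_less x y \<longleftrightarrow> (x, y) \<in> lexord {(a, b). a < b}"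

definition is_max_word :: "'i::linorder felem \<Rightarrow> 'i list \<Rightarrow> bool" where
  "is_max_word f w \<longleftrightarrow> finite (supp f) \<and> f w \<noteq> 0 \<and> (\<forall>v. f v \<noteq> 0 \<longrightarrow> v = w \<or> word_less v w)"

definition dominant :: "('i \<Rightarrow> bool) \<Rightarrow> ('i \<Rightarrow> 'i \<Rightarrow> int) \<Rightarrow> 'i::linorder list \<Rightarrow> bool" where
  "dominant p B w \<longleftrightarrow> (\<exists>u \<in> Ualg p B. u \<noteq> (\<lambda>_. 0) \<and> is_max_word u w)"

definition lyndon :: "'i::linorder list \<Rightarrow> bool" where
  "lyndon w \<longleftrightarrow> w \<noteq> [] \<and> (\<forall>u v. w = u @ v \<and> u \<noteq> [] \<and> v \<noteq> [] \<longrightarrow> word_less w v)"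

definition dominant_lyndon :: "('i \<Rightarrow> bool) \<Rightarrow> ('i \<Rightarrow> 'i \<Rightarrow> int) \<Rightarrow> 'i::linorder list \<Rightarrow> bool" where
  "dominant_lyndon p B w \<longleftrightarrow> dominant p B w \<and> lyndon w"

definition isotropic_odd :: "('i \<Rightarrow> bool) \<Rightarrow> ('i \<Rightarrow> 'i \<Rightarrow> int) \<Rightarrow> 'i list \<Rightarrow> bool" where
  "isotropic_odd p B w \<longleftrightarrow> odd (nodd p w) \<and> form_wt B w w = 0"

end

theory Submission
  imports Defs "HOL-Library.List_Lexorder"
begin

definition exc :: "'a::linorder list \<Rightarrow> 'a list \<Rightarrow> bool" where
  "exc a z \<longleftrightarrow> (\<exists>m. m < length a \<and> m < length z \<and> take m z = take m a \<and> a!m < z!m)"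

lemma less_list_iff:
  fixes x y :: "'a::linorder list"
  shows "x < y \<longleftrightarrow> (\<exists>c v. y = x @ c # v) \<or>
     (\<exists>m. m < length x \<and> m < length y \<and> take m x = take m y \<and> x!m < y!m)"
proof
  assume "x < y"
  then have "(\<exists>c v. y = x @ c # v) \<or> (\<exists>u a b v w. a < b \<and> x = u @ a # v \<and> y = u @ b # w)"
    by (auto simp: list_less_def lexord_def)
  then show "(\<exists>c v. y = x @ c # v) \<or>
     (\<exists>m. m < length x \<and> m < length y \<and> take m x = take m y \<and> x!m < y!m)"
  proof
    assume "\<exists>u a b v w. a < b \<and> x = u @ a # v \<and> y = u @ b # w"
    then obtain u a b v w where "a < b" "x = u @ a # v" "y = u @ b # w" by blast
    then show ?thesis by (intro disjI2 exI[of _ "length u"]) auto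
  qed auto
next
  assume "(\<exists>c v. y = x @ c # v) \<or>
     (\<exists>m. m < length x \<and> m < length y \<and> take m x = take m y \<and> x!m < y!m)"
  then show "x < y"
  proof
    assume "\<exists>m. m < length x \<and> m < length y \<and> take m x = take m y \<and> x!m < y!m"
    then obtain m where m: "m < length x" "m < length y" "take m x = take m y" "x!m < y!m" by blast
    have "x = take m x @ x!m # drop (Suc m) x" using m(1) by (rule id_take_nth_drop)
    moreover have "y = take m x @ y!m # drop (Suc m) y" using m by (metis id_take_nth_drop)
    ultimately show ?thesis using m(4) unfolding list_less_def lexord_def
      by (smt (verit) case_prodI mem_Collect_eq)
  qed (auto simp: list_less_def lexord_def)
qed

lemma exc_less: "exc a z \<Longrightarrow> a < z"
  unfolding exc_def less_list_iff by metis

lemma le_not_exc: "z \<le> a \<Longrightarrow> \<not> exc a z"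
  using exc_less by (meson leD)

lemma exc_take: "exc a (take k z) \<Longrightarrow> exc a z"
proof -
  assume "exc a (take k z)"
  then obtain m where m: "m < length a" "m < length (take k z)" "take m (take k z) = take m a" "a!m < (take k z)!m"
    unfolding exc_def by blast
  then have "m < k" "m < length z" by auto
  then have "take m z = take m a" "(take k z)!m = z!m" using m(3) by (auto simp: min_def)
  then show "exc a z" unfolding exc_def using m \<open>m < length z\<close> by auto
qed


lemma word_less_iff: "word_less x y \<longleftrightarrow> x < y"
  by (simp add: word_less_def list_less_def)

lemma exc_nth_le:
  assumes "\<not> exc a z" "take i z = take i a" "i < length z" "i < length a"
  shows "z!i \<le> a!i"
  using assms unfolding exc_def by (metis not_le)

lemma not_exc_take: "\<not> exc a z \<Longrightarrow> \<not> exc a (take k z)"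
  using exc_take by blast

lemma not_exc_prefix: "\<not> exc a (take k a)"
  unfolding exc_def by (auto simp: min_def)

lemma lyndon_suffix:
  assumes "lyndon a" "0 < k" "k < length a"
  shows "\<exists>\<mu>. k + \<mu> < length a \<and> take \<mu> (drop k a) = take \<mu> a \<and> a!\<mu> < a!(k+\<mu>)"
proof -
  have "a = take k a @ drop k a" by simp
  moreover have "take k a \<noteq> []" "drop k a \<noteq> []" using assms by auto
  ultimately have "a < drop k a" using assms(1) unfolding lyndon_def word_less_iff by blast
  then have "(\<exists>c v. drop k a = a @ c # v) \<or>
     (\<exists>m. m < length a \<and> m < length (drop k a) \<and> take m a = take m (drop k a) \<and> a!m < (drop k a)!m)"
    unfolding less_list_iff .
  moreover have "\<not> (\<exists>c v. drop k a = a @ c # v)"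
  proof
    assume "\<exists>c v. drop k a = a @ c # v"
    then obtain c v where "drop k a = a @ c # v" by blast
    then have "length (drop k a) = length a + Suc (length v)" by simp
    then show False by simp
  qed
  ultimately obtain m where m: "m < length (drop k a)" "take m a = take m (drop k a)" "a!m < (drop k a)!m"
    by blast
  then show ?thesis using assms by (intro exI[of _ m]) auto
qed

lemma lyndon_first_le:
  assumes "lyndon a" "t < length a"
  shows "a!0 \<le> a!t"
proof (cases "t = 0")
  case False
  then obtain \<mu> where mu: "t + \<mu> < length a" "take \<mu> (drop t a) = take \<mu> a" "a!\<mu> < a!(t+\<mu>)"
    using lyndon_suffix[OF assms(1), of t] assms by auto
  show ?thesis
  proof (cases "\<mu> = 0")
    case True then show ?thesis using mu by simp
  next
    case False
    then have "(take \<mu> (drop t a))!0 = (take \<mu> a)!0" using mu(2) by simp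
    then show ?thesis using False mu(1) by simp
  qed
qed simp

lemma concat_in_shuffles: "xs @ ys \<in> shuffles xs ys"
  by (induction xs) (auto intro: Cons_in_shuffles_leftI)

lemma append_in_shuffles_left: "w \<in> shuffles X Y \<Longrightarrow> w @ v \<in> shuffles (X @ v) Y"
proof (induction X Y arbitrary: w rule: shuffles.induct)
  case (1 ys)
  then show ?case using concat_in_shuffles[of ys v] by (simp add: shuffles_commutes)
next
  case (2 x xs)
  then show ?case by simp
next
  case (3 x xs y ys)
  from "3.prems" consider (a) w' where "w = x # w'" "w' \<in> shuffles xs (y # ys)"
    | (b) w' where "w = y # w'" "w' \<in> shuffles (x # xs) ys" by auto
  then show ?case
  proof cases
    case a
    then show ?thesis using "3.IH"(1)[OF a(2)] by (auto intro: Cons_in_shuffles_leftI)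
  next
    case b
    then show ?thesis using "3.IH"(2)[OF b(2)] by (auto intro: Cons_in_shuffles_rightI)
  qed
qed

lemma append_in_shuffles_right: "w \<in> shuffles X Y \<Longrightarrow> w @ v \<in> shuffles X (Y @ v)"
  using append_in_shuffles_left[of w Y X v] by (simp add: shuffles_commutes)

lemma shuffles_split:
  assumes "z \<in> shuffles X Y" "l \<le> length z"
  shows "\<exists>i j. i + j = l \<and> i \<le> length X \<and> j \<le> length Y \<and>
     take l z \<in> shuffles (take i X) (take j Y) \<and> drop l z \<in> shuffles (drop i X) (drop j Y)"
  using assms
proof (induction l arbitrary: z X Y)
  case 0
  then show ?case by auto
next
  case (Suc l)
  then obtain c z' where z: "z = c # z'" by (cases z) auto
  from Suc.prems(1) z consider (a) "X \<noteq> []" "hd X = c" "z' \<in> shuffles (tl X) Y"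
    | (b) "Y \<noteq> []" "hd Y = c" "z' \<in> shuffles X (tl Y)"
    by (auto simp: Cons_in_shuffles_iff)
  then show ?case
  proof cases
    case a
    from Suc.IH[OF a(3)] Suc.prems(2) z obtain i j where ij: "i + j = l" "i \<le> length (tl X)" "j \<le> length Y"
      "take l z' \<in> shuffles (take i (tl X)) (take j Y)" "drop l z' \<in> shuffles (drop i (tl X)) (drop j Y)"
      by auto
    have X: "X = c # tl X" using a by auto
    show ?thesis
      apply (rule exI[of _ "Suc i"], rule exI[of _ j])
      using ij z X Cons_in_shuffles_leftI[OF ij(4), of c]
      by (metis Suc_le_length_iff add_Suc drop_Suc_Cons length_Cons take_Suc_Cons)
  next
    case b
    from Suc.IH[OF b(3)] Suc.prems(2) z obtain i j where ij: "i + j = l" "i \<le> length X" "j \<le> length (tl Y)"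
      "take l z' \<in> shuffles (take i X) (take j (tl Y))" "drop l z' \<in> shuffles (drop i X) (drop j (tl Y))"
      by auto
    have Y: "Y = c # tl Y" using b by auto
    show ?thesis
      apply (rule exI[of _ i], rule exI[of _ "Suc j"])
      using ij z Y Cons_in_shuffles_rightI[OF ij(4), of c]
      by (metis Suc_le_length_iff add_Suc_right drop_Suc_Cons length_Cons take_Suc_Cons)
  qed
qed

lemma shuffles_snocE:
  assumes "z @ [c] \<in> shuffles P R"
  shows "(P \<noteq> [] \<and> last P = c \<and> z \<in> shuffles (butlast P) R) \<or>
         (R \<noteq> [] \<and> last R = c \<and> z \<in> shuffles P (butlast R))"
proof -
  obtain i j where ij: "i + j = length z" "i \<le> length P" "j \<le> length R"
     "take (length z) (z @ [c]) \<in> shuffles (take i P) (take j R)"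
     "drop (length z) (z @ [c]) \<in> shuffles (drop i P) (drop j R)"
    using shuffles_split[OF assms, of "length z"] by auto
  have t: "z \<in> shuffles (take i P) (take j R)" using ij(4) by simp
  have d: "[c] \<in> shuffles (drop i P) (drop j R)" using ij(5) by simp
  then have "length (drop i P) + length (drop j R) = 1" using length_shuffles by fastforce
  then consider (a) "length (drop i P) = 1" "drop j R = []" | (b) "drop i P = []" "length (drop j R) = 1"
    by fastforce
  then show ?thesis
  proof cases
    case a
    then have "drop i P = [c]" using d by (auto simp: length_Suc_conv)
    then have "P = take i P @ [c]" by (metis append_take_drop_id)
    moreover have "take j R = R" using a by simp
    ultimately show ?thesis using t by (metis butlast_snoc last_snoc snoc_eq_iff_butlast)
  next
    case b
    then have "drop j R = [c]" using d by (auto simp: length_Suc_conv)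
    then have "R = take j R @ [c]" by (metis append_take_drop_id)
    moreover have "take i P = P" using b by simp
    ultimately show ?thesis using t by (metis butlast_snoc last_snoc snoc_eq_iff_butlast)
  qed
qed

lemma shuffles_dec0:
  assumes "z \<in> shuffles X Y" "Y \<noteq> []"
  shows "\<exists>k z''. k \<le> length X \<and> z = take k X @ hd Y # z'' \<and> z'' \<in> shuffles (drop k X) (tl Y)"
  using assms
proof (induction X arbitrary: z)
  case Nil
  then show ?case by (intro exI[of _ 0] exI[of _ "tl Y"]) auto
next
  case (Cons x X)
  from Cons.prems obtain c z1 where z: "z = c # z1" by (cases z) auto
  from Cons.prems z consider (a) "c = x" "z1 \<in> shuffles X Y" | (b) "hd Y = c" "z1 \<in> shuffles (x # X) (tl Y)"
    by (auto simp: Cons_in_shuffles_iff)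
  then show ?case
  proof cases
    case a
    then obtain k z'' where "k \<le> length X" "z1 = take k X @ hd Y # z''" "z'' \<in> shuffles (drop k X) (tl Y)"
      using Cons.IH Cons.prems(2) by blast
    then show ?thesis using z a by (intro exI[of _ "Suc k"] exI[of _ z'']) auto
  next
    case b
    then show ?thesis using z by (intro exI[of _ 0] exI[of _ z1]) auto
  qed
qed

definition KLat :: "'a::linorder list \<Rightarrow> nat \<Rightarrow> bool" where
  "KLat a s \<longleftrightarrow> (\<forall>i j. i + j = s \<longrightarrow> take s a \<in> shuffles (take i a) (take j a) \<longrightarrow> a!i \<le> a!s \<and> a!j \<le> a!s)"

lemma shift_nth:
  assumes "take \<mu> (drop k a) = take \<mu> a" "m < \<mu>" "k + m < length a"
  shows "a!(k+m) = a!m"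
proof -
  have "(take \<mu> (drop k a))!m = (drop k a)!m" using assms(2) by simp
  also have "\<dots> = a!(k+m)" using assms(3) by (simp add: nth_drop)
  finally have "(take \<mu> (drop k a))!m = a!(k+m)" .
  moreover have "(take \<mu> a)!m = a!m" using assms(2) by simp
  ultimately show ?thesis using assms(1) by simp
qed

lemma shift_take:
  assumes "take \<mu> (drop k a) = take \<mu> a" "m \<le> \<mu>"
  shows "take m (drop k a) = take m a"
  by (metis assms min.absorb1 take_take)

lemma kl_contra:
  fixes a :: "'a::linorder list"
  assumes ly: "lyndon a" and t: "t \<le> length a" and ij: "i + j = t" and k1: "1 \<le> k" and ki: "k \<le> i" and j1: "1 \<le> j"
    and dec: "take t a = take k (take i a) @ hd (take j a) # z''"
    and zs: "z'' \<in> shuffles (drop k (take i a)) (tl (take j a))"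
    and kmu: "k + \<mu> < t" and mu1: "take \<mu> (drop k a) = take \<mu> a" and mu2: "a!\<mu> < a!(k+\<mu>)"
    and KL: "KLat a \<mu>"
  shows False
proof -
  define Y where "Y = take j a"
  have an: "a \<noteq> []" using ly by (simp add: lyndon_def)
  have Yne: "Y \<noteq> []" using j1 an by (simp add: Y_def)
  have hdY: "hd Y = a!0" using Yne by (simp add: Y_def hd_conv_nth)
  have lk: "length (take k (take i a)) = k" using ki ij t by simp
  have z': "hd Y # z'' = drop k (take t a)" using dec lk by (simp add: Y_def)
  also have "\<dots> = take (t-k) (drop k a)" by (simp add: drop_take)
  finally have z'2: "hd Y # z'' = take (t-k) (drop k a)" .
  have "length (hd Y # z'') = length (take (t-k) (drop k a))" using z'2 by simp
  then have lz: "length z'' = t - k - 1" using t by simp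
  have mu0: "\<mu> \<noteq> 0"
  proof
    assume "\<mu> = 0"
    have "(hd Y # z'')!0 = (take (t-k) (drop k a))!0" using z'2 by simp
    then have "a!0 = a!k" using hdY kmu t by simp
    then show False using mu2 \<open>\<mu> = 0\<close> by simp
  qed
  have mlz: "\<mu> - 1 \<le> length z''" using lz kmu by simp
  obtain i' j'' where s: "i' + j'' = \<mu> - 1" "i' \<le> length (drop k (take i a))" "j'' \<le> length (tl Y)"
     "take (\<mu>-1) z'' \<in> shuffles (take i' (drop k (take i a))) (take j'' (tl Y))"
     "drop (\<mu>-1) z'' \<in> shuffles (drop i' (drop k (take i a))) (drop j'' (tl Y))"
    using shuffles_split[OF zs[folded Y_def] mlz] by blast
  have ltz: "\<mu> - 1 < length z''" using lz kmu mu0 by simp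
  then obtain h rest where hr: "drop (\<mu>-1) z'' = h # rest" by (cases "drop (\<mu>-1) z''") auto
  have "h = z''!(\<mu>-1)" using hr ltz by (metis Cons_nth_drop_Suc nth_Cons_0 list.inject)
  also have "\<dots> = (hd Y # z'')!\<mu>" using mu0 by simp
  also have "\<dots> = a!(k+\<mu>)" using z'2 kmu t by simp
  finally have h: "h = a!(k+\<mu>)" .
  have li: "i \<le> length a" using ij t by simp
  have X': "take i' (drop k (take i a)) = take i' a"
  proof -
    have "drop k (take i a) = take (i-k) (drop k a)" by (simp add: drop_take)
    moreover have "i' \<le> i - k" using s(2) li by simp
    ultimately have "take i' (drop k (take i a)) = take i' (drop k a)" by (simp add: min_def)
    also have "\<dots> = take i' a" using shift_take[OF mu1, of i'] s(1) by simp
    finally show ?thesis .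
  qed
  have Y': "hd Y # take j'' (tl Y) = take (Suc j'') a"
  proof -
    have "hd Y # take j'' (tl Y) = take (Suc j'') Y" using Yne by (cases Y) auto
    moreover have "Suc j'' \<le> j" using s(3) Yne by (simp add: Y_def min_def split: if_splits)
    ultimately show ?thesis by (simp add: Y_def min_def)
  qed
  have "\<mu> \<le> t - k" using kmu by simp
  then have "take \<mu> (hd Y # z'') = take \<mu> a" using z'2 mu1 by (simp add: min_def)
  moreover have "take \<mu> (hd Y # z'') = hd Y # take (\<mu>-1) z''" using mu0 by (cases \<mu>) auto
  ultimately have "take \<mu> a \<in> shuffles (take i' a) (take (Suc j'') a)"
    using Cons_in_shuffles_rightI[OF s(4), of "hd Y"] X' Y' by simp
  moreover have "i' + Suc j'' = \<mu>" using s(1) mu0 by simp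
  ultimately have le: "a!i' \<le> a!\<mu> \<and> a!(Suc j'') \<le> a!\<mu>" using KL unfolding KLat_def by blast
  from s(5) hr consider (x) "drop i' (drop k (take i a)) \<noteq> []" "hd (drop i' (drop k (take i a))) = h"
     | (y) "drop j'' (tl Y) \<noteq> []" "hd (drop j'' (tl Y)) = h"
    by (auto simp: Cons_in_shuffles_iff)
  then show False
  proof cases
    case x
    then have "k + i' < i" by simp
    then have "hd (drop i' (drop k (take i a))) = a!(k+i')" using li
      by (simp add: hd_drop_conv_nth add.commute)
    also have "\<dots> = a!i'" using shift_nth[OF mu1, of i'] s(1) mu0 \<open>k + i' < i\<close> li by simp
    finally have "a!(k+\<mu>) \<le> a!\<mu>" using x h le by simp
    then show False using mu2 by (meson leD)
  next
    case y
    then have "j'' + 1 < j" using Yne by (simp add: Y_def)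
    then have "hd (drop j'' (tl Y)) = a!(Suc j'')" using y by (simp add: Y_def hd_drop_conv_nth nth_tl)
    then have "a!(k+\<mu>) \<le> a!\<mu>" using y h le by simp
    then show False using mu2 by (meson leD)
  qed
qed


lemma kl_other:
  fixes a :: "'a::linorder list"
  assumes ly: "lyndon a" and t: "t < length a" and ij: "i + j = t" and k1: "1 \<le> k" and ki: "k \<le> i" and j1: "1 \<le> j"
    and dec: "take t a = take k (take i a) @ hd (take j a) # z''"
    and zs: "z'' \<in> shuffles (drop k (take i a)) (tl (take j a))"
    and tk: "t \<le> k + \<mu>" and mu1: "take \<mu> (drop k a) = take \<mu> a" and mu2: "a!\<mu> < a!(k+\<mu>)"
    and KL: "KLat a (t-k)"
  shows "a!i \<le> a!t \<and> a!j \<le> a!t"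
proof -
  define Y where "Y = take j a"
  have an: "a \<noteq> []" using ly by (simp add: lyndon_def)
  have Yne: "Y \<noteq> []" using j1 an by (simp add: Y_def)
  have lk: "length (take k (take i a)) = k" using ki ij t by simp
  have z': "hd Y # z'' = drop k (take t a)" using dec lk by (simp add: Y_def)
  also have "\<dots> = take (t-k) (drop k a)" by (simp add: drop_take)
  finally have z'2: "hd Y # z'' = take (t-k) (drop k a)" .
  have tk': "t - k \<le> \<mu>" using tk by simp
  have A: "hd Y # z'' = take (t-k) a" using z'2 shift_take[OF mu1 tk'] by simp
  have ik: "i - k < t - k" using ij j1 ki by simp
  have B: "drop k (take i a) = take (i-k) a"
    using shift_take[OF mu1, of "i-k"] ik tk' by (simp add: drop_take)
  have "hd Y # z'' \<in> shuffles (drop k (take i a)) (hd Y # tl Y)"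
    using Cons_in_shuffles_rightI[OF zs[folded Y_def], of "hd Y"] .
  moreover have "hd Y # tl Y = Y" using Yne by simp
  ultimately have "take (t-k) a \<in> shuffles (take (i-k) a) Y"
    using A B by simp
  then have "take (t-k) a \<in> shuffles (take (i-k) a) (take j a)" by (simp add: Y_def)
  moreover have "(i-k) + j = t - k" using ij ki by simp
  ultimately have le: "a!(i-k) \<le> a!(t-k) \<and> a!j \<le> a!(t-k)" using KL unfolding KLat_def by blast
  have "a!(t-k) \<le> a!t"
  proof (cases "t - k < \<mu>")
    case True
    then have "a!(k+(t-k)) = a!(t-k)" using shift_nth[OF mu1 True] t ki ij by simp
    then show ?thesis using ki ij by simp
  next
    case False
    then have "t - k = \<mu>" using tk' by simp
    then have "t = k + \<mu>" using ki ij by simp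
    then show ?thesis using mu2 \<open>t - k = \<mu>\<close> by simp
  qed
  moreover have "a!i = a!(i-k)"
  proof -
    have "i - k < \<mu>" using ik tk' by simp
    moreover have "k + (i-k) < length a" using t ki ij by simp
    ultimately have "a!(k+(i-k)) = a!(i-k)" using shift_nth[OF mu1] by blast
    then show ?thesis using ki by simp
  qed
  ultimately show ?thesis using le by (metis order_trans)
qed


lemma kl_decomp:
  fixes a :: "'a::linorder list"
  assumes t: "t \<le> length a" and ij: "i + j = t" and i1: "1 \<le> i" and j1: "1 \<le> j"
    and sh: "tl (take t a) \<in> shuffles (tl (take i a)) (take j a)"
  shows "\<exists>k z''. 1 \<le> k \<and> k \<le> i \<and> take t a = take k (take i a) @ hd (take j a) # z'' \<and>
           z'' \<in> shuffles (drop k (take i a)) (tl (take j a))"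
proof -
  have an: "a \<noteq> []" using t ij i1 by auto
  have Yne: "take j a \<noteq> []" using j1 an by simp
  obtain k' z'' where d: "k' \<le> length (tl (take i a))" "tl (take t a) = take k' (tl (take i a)) @ hd (take j a) # z''"
      "z'' \<in> shuffles (drop k' (tl (take i a))) (tl (take j a))"
    using shuffles_dec0[OF sh Yne] by blast
  have ne: "take t a \<noteq> []" using t ij i1 an by simp
  have "hd (take t a) = a!0" using ne t ij i1 by (simp add: hd_conv_nth)
  then obtain ys where ys: "take t a = a!0 # ys" using ne by (metis list.collapse)
  have nei: "take i a \<noteq> []" using i1 an by simp
  have "hd (take i a) = a!0" using nei i1 by (simp add: hd_conv_nth)
  then obtain xs where xs: "take i a = a!0 # xs" using nei by (metis list.collapse)
  have d2: "ys = take k' xs @ hd (take j a) # z''" using d(2) xs ys by simp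
  have "take t a = take (Suc k') (take i a) @ hd (take j a) # z''"
    using ys xs d2 by simp
  moreover have "z'' \<in> shuffles (drop (Suc k') (take i a)) (tl (take j a))" using d(3) xs by simp
  moreover have "Suc k' \<le> i" using d(1) i1 t ij by simp
  moreover have "1 \<le> Suc k'" by simp
  ultimately show ?thesis by blast
qed

lemma kl_step:
  fixes a :: "'a::linorder list"
  assumes ly: "lyndon a" and t: "t < length a" and ij: "i + j = t" and i1: "1 \<le> i" and j1: "1 \<le> j"
    and sh: "tl (take t a) \<in> shuffles (tl (take i a)) (take j a)"
    and IH: "\<And>s. s < t \<Longrightarrow> KLat a s"
  shows "a!i \<le> a!t \<and> a!j \<le> a!t"
proof -
  obtain k z'' where k: "1 \<le> k" "k \<le> i" "take t a = take k (take i a) @ hd (take j a) # z''"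
      "z'' \<in> shuffles (drop k (take i a)) (tl (take j a))"
    using kl_decomp[OF less_imp_le[OF t] ij i1 j1 sh] by blast
  obtain \<mu> where mu: "k + \<mu> < length a" "take \<mu> (drop k a) = take \<mu> a" "a!\<mu> < a!(k+\<mu>)"
  proof -
    have "0 < k" "k < length a" using k(1,2) t ij j1 by auto
    then show ?thesis using lyndon_suffix[OF ly, of k] that by blast
  qed
  show ?thesis
  proof (cases "k + \<mu> < t")
    case True
    have "KLat a \<mu>" using IH True by simp
    then show ?thesis using kl_contra[OF ly less_imp_le[OF t] ij k(1,2) j1 k(3,4) True mu(2,3)] by blast
  next
    case False
    have "KLat a (t - k)" using IH k(1,2) ij j1 by simp
    moreover have "t \<le> k + \<mu>" using False by simp
    ultimately show ?thesis using kl_other[OF ly t ij k(1,2) j1 k(3,4) _ mu(2,3)] by blast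
  qed
qed

lemma KL:
  fixes a :: "'a::linorder list"
  assumes ly: "lyndon a"
  shows "s < length a \<Longrightarrow> KLat a s"
proof (induction s rule: less_induct)
  case (less s)
  show ?case unfolding KLat_def
  proof (intro allI impI)
    fix i j assume ij: "i + j = s" and sh: "take s a \<in> shuffles (take i a) (take j a)"
    show "a!i \<le> a!s \<and> a!j \<le> a!s"
    proof (cases "i = 0 \<or> j = 0")
      case True
      then show ?thesis
      proof
        assume "i = 0"
        then show ?thesis using ij lyndon_first_le[OF ly less.prems] by simp
      next
        assume "j = 0"
        then show ?thesis using ij lyndon_first_le[OF ly less.prems] by simp
      qed
    next
      case False
      then have i1: "1 \<le> i" and j1: "1 \<le> j" by auto
      have an: "a \<noteq> []" using less.prems by auto
      have IH': "\<And>s'. s' < s \<Longrightarrow> KLat a s'" using less.IH less.prems by simp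
      have ne: "take s a \<noteq> []" using ij i1 an by simp
      have "hd (take s a) = a!0" using ne ij i1 by (simp add: hd_conv_nth)
      then obtain ys where ys: "take s a = a!0 # ys" using ne by (metis list.collapse)
      then have ta: "take s a = a!0 # tl (take s a)" by simp
      have tia: "take i a \<noteq> []" "take j a \<noteq> []" using i1 j1 an by auto
      have sh': "a!0 # tl (take s a) \<in> shuffles (take i a) (take j a)"
        by (subst ta[symmetric]) (rule sh)
      from sh' have "(take i a \<noteq> [] \<and> hd (take i a) = a!0 \<and> tl (take s a) \<in> shuffles (tl (take i a)) (take j a)) \<or>
         (take j a \<noteq> [] \<and> hd (take j a) = a!0 \<and> tl (take s a) \<in> shuffles (take i a) (tl (take j a)))"
        by (simp only: Cons_in_shuffles_iff)
      then show ?thesis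
      proof
        assume "take i a \<noteq> [] \<and> hd (take i a) = a!0 \<and> tl (take s a) \<in> shuffles (tl (take i a)) (take j a)"
        then show ?thesis using kl_step[OF ly less.prems ij i1 j1 _ IH'] by blast
      next
        assume "take j a \<noteq> [] \<and> hd (take j a) = a!0 \<and> tl (take s a) \<in> shuffles (take i a) (tl (take j a))"
        then have "tl (take s a) \<in> shuffles (tl (take j a)) (take i a)" by (simp add: shuffles_commutes)
        moreover have "j + i = s" using ij by simp
        ultimately show ?thesis using kl_step[OF ly less.prems _ j1 i1 _ IH'] by blast
      qed
    qed
  qed
qed

lemma NL:
  fixes a :: "'a::linorder list"
  assumes ly: "lyndon a" and ij: "i + j = length a" and i1: "1 \<le> i" and j1: "1 \<le> j"
    and sh: "a \<in> shuffles (take i a) (take j a)"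
  shows False
proof -
  have nl: False if ij: "i + j = length a" and i1: "1 \<le> i" and j1: "1 \<le> j"
      and sh: "tl (take (length a) a) \<in> shuffles (tl (take i a)) (take j a)" for i j
  proof -
    obtain k z'' where k: "1 \<le> k" "k \<le> i" "take (length a) a = take k (take i a) @ hd (take j a) # z''"
      "z'' \<in> shuffles (drop k (take i a)) (tl (take j a))"
      using kl_decomp[OF order_refl ij i1 j1 sh] by blast
    obtain \<mu> where mu: "k + \<mu> < length a" "take \<mu> (drop k a) = take \<mu> a" "a!\<mu> < a!(k+\<mu>)"
    proof -
      have "0 < k" "k < length a" using k(1,2) ij j1 by auto
      then show ?thesis using lyndon_suffix[OF ly, of k] that by blast
    qed
    have "KLat a \<mu>" using KL[OF ly] mu(1) by simp
    then show False using kl_contra[OF ly order_refl ij k(1,2) j1 k(3,4) mu(1) mu(2,3)] by blast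
  qed
  have an: "a \<noteq> []" using ly by (simp add: lyndon_def)
  obtain ys where ys: "a = a!0 # ys" using an by (cases a) auto
  then have ta: "a = a!0 # tl a" by (metis list.sel(3))
  have sh': "a!0 # tl a \<in> shuffles (take i a) (take j a)"
    by (subst ta[symmetric]) (rule sh)
  from sh' have "(take i a \<noteq> [] \<and> hd (take i a) = a!0 \<and> tl a \<in> shuffles (tl (take i a)) (take j a)) \<or>
         (take j a \<noteq> [] \<and> hd (take j a) = a!0 \<and> tl a \<in> shuffles (take i a) (tl (take j a)))"
    by (simp only: Cons_in_shuffles_iff)
  then show False
  proof
    assume "take i a \<noteq> [] \<and> hd (take i a) = a!0 \<and> tl a \<in> shuffles (tl (take i a)) (take j a)"
    then show False using nl[OF ij i1 j1] by simp
  next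
    assume "take j a \<noteq> [] \<and> hd (take j a) = a!0 \<and> tl a \<in> shuffles (take i a) (tl (take j a))"
    then have "tl a \<in> shuffles (tl (take j a)) (take i a)" by (simp add: shuffles_commutes)
    moreover have "j + i = length a" using ij by simp
    ultimately show False using nl[OF _ j1 i1] by simp
  qed
qed

lemma inv_step:
  fixes a :: "'a::linorder list"
  assumes ly: "lyndon a" and t: "t < length a" and sh: "take t a \<in> shuffles P' R"
    and P': "P' = take (length P') a" and R: "R = take (length R) a"
    and ne: "\<not> exc a (P' @ [a!t])"
  shows "P' @ [a!t] = take (Suc (length P')) a"
proof -
  define i where "i = length P'"
  define j where "j = length R"
  have ij: "i + j = t" using length_shuffles[OF sh] t by (simp add: i_def j_def)
  have sh2: "take t a \<in> shuffles (take i a) (take j a)" using sh P' R by (simp add: i_def j_def)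
  have "a!i \<le> a!t" using KL[OF ly t] sh2 ij unfolding KLat_def by blast
  moreover have "(P' @ [a!t])!i \<le> a!i"
    by (rule exc_nth_le[OF ne]) (use P' ij t in \<open>auto simp: i_def\<close>)
  ultimately have "a!t = a!i" by (simp add: i_def)
  then show ?thesis using P' ij t by (simp add: i_def take_Suc_conv_app_nth)
qed

lemma inv_prefix:
  fixes a :: "'a::linorder list"
  assumes ly: "lyndon a"
  shows "t \<le> length a \<Longrightarrow> take t a \<in> shuffles P R \<Longrightarrow> \<not> exc a P \<Longrightarrow> \<not> exc a R \<Longrightarrow>
    P = take (length P) a \<and> R = take (length R) a"
proof (induction t arbitrary: P R)
  case 0
  then show ?case by simp
next
  case (Suc t)
  have t: "t < length a" using Suc.prems by simp
  have "take (Suc t) a = take t a @ [a!t]" using t by (simp add: take_Suc_conv_app_nth)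
  then have "take t a @ [a!t] \<in> shuffles P R" using Suc.prems by simp
  then have "(P \<noteq> [] \<and> last P = a!t \<and> take t a \<in> shuffles (butlast P) R) \<or>
         (R \<noteq> [] \<and> last R = a!t \<and> take t a \<in> shuffles P (butlast R))" by (rule shuffles_snocE)
  then consider (p) "P \<noteq> []" "last P = a!t" "take t a \<in> shuffles (butlast P) R"
    | (r) "R \<noteq> []" "last R = a!t" "take t a \<in> shuffles P (butlast R)"
    by blast
  then show ?case
  proof cases
    case p
    have bP: "butlast P = take (length P - 1) P" by (simp add: butlast_conv_take)
    have nb: "\<not> exc a (butlast P)" using Suc.prems(3) bP not_exc_take by metis
    have IH: "butlast P = take (length (butlast P)) a \<and> R = take (length R) a"
      using Suc.IH[OF less_imp_le[OF t] p(3) nb Suc.prems(4)] .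
    have P: "P = butlast P @ [a!t]" using p(1,2) by (metis append_butlast_last_id)
    have "butlast P @ [a!t] = take (Suc (length (butlast P))) a"
      using inv_step[OF ly t p(3)] IH Suc.prems(3) P by metis
    then show ?thesis using P IH p(1) by simp
  next
    case r
    have bR: "butlast R = take (length R - 1) R" by (simp add: butlast_conv_take)
    have nb: "\<not> exc a (butlast R)" using Suc.prems(4) bR not_exc_take by metis
    have IH: "P = take (length P) a \<and> butlast R = take (length (butlast R)) a"
      using Suc.IH[OF less_imp_le[OF t] r(3) Suc.prems(3) nb] .
    have R: "R = butlast R @ [a!t]" using r(1,2) by (metis append_butlast_last_id)
    have sh': "take t a \<in> shuffles (butlast R) P" using r(3) by (simp add: shuffles_commutes)
    have "butlast R @ [a!t] = take (Suc (length (butlast R))) a"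
      using inv_step[OF ly t sh'] IH Suc.prems(4) R by metis
    then show ?thesis using R IH r(1) by simp
  qed
qed

lemma shuffle_not_exc:
  fixes a :: "'a::linorder list"
  assumes ly: "lyndon a" and sh: "z \<in> shuffles p r" and np: "\<not> exc a p" and nr: "\<not> exc a r"
  shows "\<not> exc a z"
proof
  assume "exc a z"
  then obtain m where m: "m < length a" "m < length z" "take m z = take m a" "a!m < z!m"
    unfolding exc_def by blast
  obtain i j where s: "i + j = m" "i \<le> length p" "j \<le> length r"
     "take m z \<in> shuffles (take i p) (take j r)" "drop m z \<in> shuffles (drop i p) (drop j r)"
    using shuffles_split[OF sh less_imp_le[OF m(2)]] by blast
  have sh': "take m a \<in> shuffles (take i p) (take j r)" using s(4) m(3) by simp
  have inv: "take i p = take (length (take i p)) a \<and> take j r = take (length (take j r)) a"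
    using inv_prefix[OF ly less_imp_le[OF m(1)] sh' not_exc_take[OF np] not_exc_take[OF nr]] .
  then have tp: "take i p = take i a" and tr: "take j r = take j r" "take j r = take j a"
    using s(2,3) by (simp_all add: min_def)
  have sh'': "take m a \<in> shuffles (take i a) (take j a)" using sh' tp tr(2) by simp
  have KLm: "a!i \<le> a!m \<and> a!j \<le> a!m"
    using KL[OF ly m(1)] sh'' s(1) unfolding KLat_def by blast
  have dz: "drop m z = z!m # drop (Suc m) z" using m(2) by (simp add: Cons_nth_drop_Suc)
  have "(drop i p \<noteq> [] \<and> hd (drop i p) = z!m \<and> drop (Suc m) z \<in> shuffles (tl (drop i p)) (drop j r)) \<or>
        (drop j r \<noteq> [] \<and> hd (drop j r) = z!m \<and> drop (Suc m) z \<in> shuffles (drop i p) (tl (drop j r)))"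
    using s(5) unfolding dz by (simp only: Cons_in_shuffles_iff)
  then have "z!m \<le> a!m"
  proof
    assume h: "drop i p \<noteq> [] \<and> hd (drop i p) = z!m \<and> drop (Suc m) z \<in> shuffles (tl (drop i p)) (drop j r)"
    then have ip: "i < length p" by simp
    then have "p!i = z!m" using h by (simp add: hd_drop_conv_nth)
    moreover have "p!i \<le> a!i" using exc_nth_le[OF np] ip tp s(1) m(1) by simp
    ultimately have "z!m \<le> a!i" by simp
    then show ?thesis using KLm order_trans by blast
  next
    assume h: "drop j r \<noteq> [] \<and> hd (drop j r) = z!m \<and> drop (Suc m) z \<in> shuffles (drop i p) (tl (drop j r))"
    then have ip: "j < length r" by simp
    then have "r!j = z!m" using h by (simp add: hd_drop_conv_nth)
    moreover have "r!j \<le> a!j" using exc_nth_le[OF nr] ip tr(2) s(1) m(1) by simp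
    ultimately have "z!m \<le> a!j" by simp
    then show ?thesis using KLm order_trans by blast
  qed
  then show False using m(4) by (meson leD)
qed

lemma prefix_le_eq:
  fixes x a :: "'a::linorder list"
  assumes "take (length a) x = a" "x \<le> a"
  shows "x = a"
proof (rule ccontr)
  assume "x \<noteq> a"
  have "\<not> length x \<le> length a"
  proof
    assume "length x \<le> length a"
    then have "take (length a) x = x" by simp
    then show False using assms(1) \<open>x \<noteq> a\<close> by simp
  qed
  then obtain c v where cv: "drop (length a) x = c # v" by (cases "drop (length a) x") auto
  have "x = take (length a) x @ drop (length a) x" by simp
  then have "x = a @ c # v" using assms(1) cv by simp
  then have "a < x" unfolding less_list_iff by blast
  then show False using assms(2) by simp
qed

lemma append_less_mono: "(y::'a::linorder list) < b \<Longrightarrow> a @ y < a @ b"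
  unfolding list_less_def by (rule lexord_append_leftI)

lemma main_comb:
  fixes a :: "'a::linorder list"
  assumes ly: "lyndon a" and xa: "x \<le> a" and yb: "y \<le> b" and ba: "b \<le> a" and sh: "w \<in> shuffles x y"
  shows "(w = a @ b \<and> x = a \<and> y = b) \<or> w < a @ b"
proof (rule ccontr)
  assume H: "\<not> ((w = a @ b \<and> x = a \<and> y = b) \<or> w < a @ b)"
  then have abw: "a @ b \<le> w" by auto
  have nx: "\<not> exc a x" using le_not_exc[OF xa] .
  have ny: "\<not> exc a y" using le_not_exc yb ba by (metis order_trans)
  have nw: "\<not> exc a w" using shuffle_not_exc[OF ly sh nx ny] .
  have pre: "take (length a) w = a"
  proof (cases "a @ b = w")
    case True then show ?thesis by auto
  next
    case False
    then have "a @ b < w" using abw by simp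
    then have "(\<exists>c v. w = (a @ b) @ c # v) \<or>
      (\<exists>m. m < length (a @ b) \<and> m < length w \<and> take m (a @ b) = take m w \<and> (a @ b)!m < w!m)"
      unfolding less_list_iff .
    then show ?thesis
    proof
      assume "\<exists>c v. w = (a @ b) @ c # v" then show ?thesis by auto
    next
      assume "\<exists>m. m < length (a @ b) \<and> m < length w \<and> take m (a @ b) = take m w \<and> (a @ b)!m < w!m"
      then obtain m where m: "m < length (a @ b)" "m < length w" "take m (a @ b) = take m w" "(a @ b)!m < w!m"
        by blast
      show ?thesis
      proof (cases "m < length a")
        case True
        then have "exc a w" unfolding exc_def using m
          by (intro exI[of _ m]) (auto simp: nth_append)
        then show ?thesis using nw by simp
      next
        case False
        then have "take (length a) (take m (a @ b)) = a" by (simp add: min_def)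
        moreover have "take (length a) (take m w) = take (length a) w" using False by (simp add: min_def)
        ultimately show ?thesis using m(3) by metis
      qed
    qed
  qed
  have ln: "length a \<le> length w" using arg_cong[OF pre, of length] by (simp add: min_def split: if_splits)
  obtain i j where s: "i + j = length a" "i \<le> length x" "j \<le> length y"
     "take (length a) w \<in> shuffles (take i x) (take j y)" "drop (length a) w \<in> shuffles (drop i x) (drop j y)"
    using shuffles_split[OF sh ln] by blast
  have sha: "take (length a) a \<in> shuffles (take i x) (take j y)" using s(4) pre by simp
  have inv: "take i x = take (length (take i x)) a \<and> take j y = take (length (take j y)) a"
    using inv_prefix[OF ly order_refl sha not_exc_take[OF nx] not_exc_take[OF ny]] .
  then have tx: "take i x = take i a" and ty: "take j y = take j a"
    using s(2,3) by (simp_all add: min_def)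
  have w: "w = a @ drop (length a) w" using pre append_take_drop_id[of "length a" w] by simp
  have "i = 0 \<or> j = 0"
  proof (rule ccontr)
    assume "\<not> (i = 0 \<or> j = 0)"
    then have "1 \<le> i" "1 \<le> j" by auto
    moreover have "a \<in> shuffles (take i a) (take j a)" using s(4) pre tx ty by simp
    ultimately show False using NL[OF ly s(1)] by blast
  qed
  then show False
  proof
    assume j0: "j = 0"
    then have "take (length a) x = a" using tx s(1) by simp
    then have x: "x = a" using prefix_le_eq xa by blast
    then have "drop (length a) w = y" using s(5) j0 s(1) by simp
    then have "w = a @ y" using w by simp
    then show False using H x yb append_less_mono[of y b a] by (auto simp: le_less)
  next
    assume i0: "i = 0"
    then have "take (length a) y = a" using ty s(1) by simp
    then have y: "y = a" using prefix_le_eq[OF _ order_trans[OF yb ba]] by blast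
    then have b: "b = a" using yb ba by simp
    then have "drop (length a) w = x" using s(5) i0 s(1) y by simp
    then have "w = a @ x" using w by simp
    then show False using H y b xa append_less_mono[of x a a] by (auto simp: le_less)
  qed
qed

lemma g2:
  fixes a :: "'a::linorder list"
  assumes ly: "lyndon a" and Ya: "Y \<le> a" and Yne: "Y \<noteq> []" and X: "X' @ [c] = a"
    and sh: "w' \<in> shuffles X' Y" and w: "w' @ [c] = a @ Y"
  shows "Y = a"
proof -
  have lX: "length a = Suc (length X')" using arg_cong[OF X, of length] by simp
  have lw: "length w' = length X' + length Y" using length_shuffles[OF sh] .
  have lY: "1 \<le> length Y" using Yne by (cases Y) auto
  have ln: "length a \<le> length w'" using lX lw lY by linarith
  have "take (length a) (w' @ [c]) = take (length a) w'" using ln by simp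
  then have pre: "take (length a) w' = a" using w by simp
  obtain i j where s: "i + j = length a" "i \<le> length X'" "j \<le> length Y"
     "take (length a) w' \<in> shuffles (take i X') (take j Y)"
    using shuffles_split[OF sh ln] by blast
  have "X' = butlast a" using X by (metis butlast_snoc)
  then have "X' = take (length a - 1) a" by (simp add: butlast_conv_take)
  moreover have "i \<le> length a - 1" using s(2) lX by linarith
  ultimately have tX: "take i X' = take i a" by (simp add: min_def)
  have sha: "take (length a) a \<in> shuffles (take i X') (take j Y)" using s(4) pre by simp
  have nX: "\<not> exc a (take i X')" using tX not_exc_prefix by simp
  have "take j Y = take (length (take j Y)) a"
    using inv_prefix[OF ly order_refl sha nX not_exc_take[OF le_not_exc[OF Ya]]] by blast
  then have ty: "take j Y = take j a" using s(3) by (simp add: min_def)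
  have "i = 0"
  proof (rule ccontr)
    assume "i \<noteq> 0"
    then have i1: "1 \<le> i" by simp
    have j1: "1 \<le> j" using s(1,2) lX by linarith
    have "a \<in> shuffles (take i a) (take j a)" using sha tX ty by simp
    then show False using NL[OF ly s(1) i1 j1] by blast
  qed
  then have "take (length a) Y = a" using ty s(1) by simp
  then show ?thesis using prefix_le_eq Ya by blast
qed

lemma g3:
  fixes a :: "'a::linorder list"
  assumes ly: "lyndon a" and i1: "1 \<le> i" and ia: "i < length a"
    and sh: "w' \<in> shuffles (take i a) (take (length a - 1) a)" and w: "w' = a @ take (i-1) a"
  shows False
proof -
  have ln: "length a \<le> length w'" using w by simp
  have pre: "take (length a) w' = a" using w by simp
  obtain i' j' where s: "i' + j' = length a" "i' \<le> length (take i a)" "j' \<le> length (take (length a - 1) a)"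
     "take (length a) w' \<in> shuffles (take i' (take i a)) (take j' (take (length a - 1) a))"
    using shuffles_split[OF sh ln] by blast
  have i'i: "i' \<le> i" and j'n: "j' \<le> length a - 1" using s(2,3) ia by auto
  have "a \<in> shuffles (take i' a) (take j' a)" using s(4) pre i'i j'n by (simp add: min_def)
  moreover have "i' \<noteq> 0" using s(1) j'n ia by auto
  moreover have "j' \<noteq> 0" using s(1) i'i ia by auto
  ultimately show False using NL[OF ly s(1)] by simp
qed

lemma qvar_pow: "qvar ^ n = Fract ([:0,1:] ^ n) 1"
  by (induction n) (simp_all add: qvar_def One_fract_def)

lemma qvar_nz: "qvar \<noteq> 0"
proof
  assume "qvar = 0"
  then have "Fract [:0,1:] 1 = Fract (0::rat poly) 1" by (simp add: qvar_def Zero_fract_def)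
  then show False by (simp add: eq_fract)
qed

lemma qvar_pow_pm1:
  assumes "qvar ^ n = Fract c 1" "c = 1 \<or> c = -1"
  shows "n = 0"
proof -
  have "([:0,1:] :: rat poly) ^ n = c" using assms(1) by (simp add: qvar_pow eq_fract)
  then have "degree (([:0,1:] :: rat poly) ^ n) = degree c" by simp
  moreover have "degree (([:0,1:] :: rat poly) ^ n) = n" by (simp add: degree_power_eq)
  moreover have "degree c = 0" using assms(2) by auto
  ultimately show ?thesis by simp
qed

lemma one_ne_minus_one_q: "(1::qfield) \<noteq> -1"
proof
  assume "(1::qfield) = -1"
  then have "Fract (1::rat poly) 1 = Fract (-1) 1" by (simp add: One_fract_def)
  then have "(1::rat poly) = -1" by (simp add: eq_fract)
  then have "coeff (1::rat poly) 0 = coeff (-1) 0" by simp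
  then show False by simp
qed

lemma qpow_pm1:
  assumes "power_int qvar k = Fract c 1" "c = 1 \<or> c = -1"
  shows "k = 0"
proof (cases "k \<ge> 0")
  case True
  then have "qvar ^ nat k = Fract c 1" using assms(1) by (simp add: power_int_def)
  then have "nat k = 0" using qvar_pow_pm1 assms(2) by blast
  then show ?thesis using True by simp
next
  case False
  then have "inverse qvar ^ nat (-k) = Fract c 1" using assms(1) by (simp add: power_int_def)
  then have "inverse (qvar ^ nat (-k)) = Fract c 1" by (simp add: power_inverse)
  then have "qvar ^ nat (-k) = inverse (Fract c 1)" by (metis inverse_inverse_eq)
  then have "qvar ^ nat (-k) = Fract 1 c" by simp
  moreover have "Fract 1 c = Fract c 1" using assms(2) by (auto simp: eq_fract)
  ultimately have "nat (-k) = 0" using qvar_pow_pm1 assms(2) by metis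
  then show ?thesis using False by simp
qed

lemma qpow_ne_one: "k \<noteq> 0 \<Longrightarrow> power_int qvar k \<noteq> 1"
  using qpow_pm1[of k 1] by (auto simp: One_fract_def)

lemma qpow_ne_minus_one: "power_int qvar k \<noteq> -1"
proof
  assume h: "power_int qvar k = -1"
  then have "power_int qvar k = Fract (-1) 1" by (simp add: One_fract_def)
  then have "k = 0" using qpow_pm1 by blast
  then show False using h one_ne_minus_one_q by simp
qed

lemma shr_supp: "shr p B xs ys v \<noteq> 0 \<Longrightarrow> v \<in> shuffles (rev xs) (rev ys)"
proof (induction p B xs ys arbitrary: v rule: shr.induct)
  case (1 p B ys)
  then show ?case by (simp add: word_vec_def split: if_splits)
next
  case (2 p B x xs)
  then show ?case by (simp add: word_vec_def split: if_splits)
next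
  case (3 p B i xs j ys)
  let ?c = "(if odd (nodd p (i # xs)) \<and> p j then -1 else 1) * power_int qvar (- form_wt_letter B (i # xs) j)"
  have "app_letter (shr p B xs (j # ys)) i v + ?c * app_letter (shr p B (i # xs) ys) j v \<noteq> 0"
    using "3.prems" by simp
  then have "app_letter (shr p B xs (j # ys)) i v \<noteq> 0 \<or> app_letter (shr p B (i # xs) ys) j v \<noteq> 0"
    by auto
  then show ?case
  proof
    assume h: "app_letter (shr p B xs (j # ys)) i v \<noteq> 0"
    then have v: "v \<noteq> []" "last v = i" "shr p B xs (j # ys) (butlast v) \<noteq> 0"
      by (auto simp: app_letter_def split: if_splits)
    have "butlast v \<in> shuffles (rev xs) (rev (j # ys))" using "3.IH"(1)[OF v(3)] .
    then have "butlast v @ [i] \<in> shuffles (rev xs @ [i]) (rev (j # ys))"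
      by (rule append_in_shuffles_left)
    moreover have "v = butlast v @ [i]" using v(1,2) by (metis append_butlast_last_id)
    ultimately show ?thesis by simp
  next
    assume h: "app_letter (shr p B (i # xs) ys) j v \<noteq> 0"
    then have v: "v \<noteq> []" "last v = j" "shr p B (i # xs) ys (butlast v) \<noteq> 0"
      by (auto simp: app_letter_def split: if_splits)
    have "butlast v \<in> shuffles (rev (i # xs)) (rev ys)" using "3.IH"(2)[OF v(3)] .
    then have "butlast v @ [j] \<in> shuffles (rev (i # xs)) (rev ys @ [j])"
      by (rule append_in_shuffles_right)
    moreover have "v = butlast v @ [j]" using v(1,2) by (metis append_butlast_last_id)
    ultimately show ?thesis by simp
  qed
qed

lemma sw_supp: "shuffle_word p B x y w \<noteq> 0 \<Longrightarrow> w \<in> shuffles x y"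
  using shr_supp[of p B "rev x" "rev y" w] by (simp add: shuffle_word_def)

lemma finite_supp_sw: "finite (supp (shuffle_word p B x y))"
proof -
  have "supp (shuffle_word p B x y) \<subseteq> shuffles x y" using sw_supp by (auto simp: supp_def)
  then show ?thesis using finite_shuffles finite_subset by blast
qed

definition coefw :: "('i \<Rightarrow> bool) \<Rightarrow> ('i \<Rightarrow> 'i \<Rightarrow> int) \<Rightarrow> 'i list \<Rightarrow> 'i \<Rightarrow> qfield" where
  "coefw p B x j = (if odd (nodd p x) \<and> p j then -1 else 1) * power_int qvar (- form_wt_letter B x j)"

lemma nodd_rev: "nodd p (rev x) = nodd p x"
  by (simp add: nodd_def rev_filter[symmetric])

lemma fwl_rev: "form_wt_letter B (rev x) j = form_wt_letter B x j"
  by (simp add: form_wt_letter_def rev_map[symmetric] sum_list_rev)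

lemma sw_rec:
  "shuffle_word p B (x @ [i]) (y @ [j]) (w @ [k]) =
    (if k = i then shuffle_word p B x (y @ [j]) w else 0) +
    (if k = j then coefw p B (x @ [i]) j * shuffle_word p B (x @ [i]) y w else 0)"
proof -
  have "rev (x @ [i]) = i # rev x" "rev (y @ [j]) = j # rev y" by simp_all
  have c: "coefw p B (x @ [i]) j = (if odd (nodd p (i # rev x)) \<and> p j then -1 else 1) *
      power_int qvar (- form_wt_letter B (i # rev x) j)"
    using nodd_rev[of p "x @ [i]"] fwl_rev[of B "x @ [i]" j] by (simp add: coefw_def)
  show ?thesis
    unfolding shuffle_word_def using c by (simp add: app_letter_def)
qed

lemma sw_nil_right: "shuffle_word p B x [] w = word_vec x w"
  by (cases "rev x") (simp_all add: shuffle_word_def)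

lemma sw_nil_left: "shuffle_word p B [] y w = word_vec y w"
  by (simp add: shuffle_word_def)

lemma coefw_nz: "coefw p B x j \<noteq> 0"
  using qvar_nz by (simp add: coefw_def power_int_not_zero)

lemma take_le_self: "take n x \<le> (x::'a::linorder list)"
proof (cases "drop n x")
  case Nil
  then show ?thesis by simp
next
  case (Cons c v)
  have "x = take n x @ drop n x" by simp
  then have "x = take n x @ c # v" using Cons by simp
  then have "take n x < x" unfolding less_list_iff by blast
  then show ?thesis by simp
qed

definition sgnf :: "('i \<Rightarrow> bool) \<Rightarrow> 'i list \<Rightarrow> 'i list \<Rightarrow> qfield" where
  "sgnf p a y = (if odd (nodd p a) then (-1) ^ (nodd p y) else 1)"

lemma path1:
  fixes a b :: "'i::linorder list"
  assumes ly: "lyndon a" and ba: "b \<le> a" and bna: "b \<noteq> a"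
  shows "j \<le> length b \<Longrightarrow> shuffle_word p B a (take j b) (a @ take j b) \<noteq> 0"
proof (induction j)
  case 0
  then show ?case by (simp add: sw_nil_right word_vec_def)
next
  case (Suc j)
  have an: "a \<noteq> []" using ly by (simp add: lyndon_def)
  define l where "l = b!j"
  have tb: "take (Suc j) b = take j b @ [l]" using Suc.prems by (simp add: l_def take_Suc_conv_app_nth)
  have aa: "butlast a @ [last a] = a" using an by simp
  have rec: "shuffle_word p B a (take (Suc j) b) (a @ take (Suc j) b) =
     (if l = last a then shuffle_word p B (butlast a) (take (Suc j) b) (a @ take j b) else 0) +
     (if l = l then coefw p B a l * shuffle_word p B a (take j b) (a @ take j b) else 0)"
    using sw_rec[of p B "butlast a" "last a" "take j b" l "a @ take j b" l] aa tb by simp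
  have z: "(if l = last a then shuffle_word p B (butlast a) (take (Suc j) b) (a @ take j b) else 0) = 0"
  proof (cases "l = last a")
    case True
    show ?thesis
    proof (rule ccontr)
      assume "(if l = last a then shuffle_word p B (butlast a) (take (Suc j) b) (a @ take j b) else 0) \<noteq> 0"
      then have "shuffle_word p B (butlast a) (take (Suc j) b) (a @ take j b) \<noteq> 0" using True by simp
      then have sh: "a @ take j b \<in> shuffles (butlast a) (take (Suc j) b)" by (rule sw_supp)
      have Ya: "take (Suc j) b \<le> a" using take_le_self ba by (metis order_trans)
      have Yne: "take (Suc j) b \<noteq> []" using tb by simp
      have X: "butlast a @ [l] = a" using aa True by simp
      have w: "(a @ take j b) @ [l] = a @ take (Suc j) b" using tb by simp
      have ta: "take (Suc j) b = a" using g2[OF ly Ya Yne X sh w] .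
      then have "length a = Suc j" using Suc.prems by auto
      then have "take (length a) b = a" using ta by simp
      then have "b = a" using prefix_le_eq ba by blast
      then show False using bna by simp
    qed
  qed simp
  have "shuffle_word p B a (take j b) (a @ take j b) \<noteq> 0" using Suc.IH Suc.prems by simp
  then show ?case using rec z coefw_nz[of p B a l] by simp
qed

lemma step_formula:
  "coefw p B a l * (sgnf p a y * power_int qvar (- form_wt B a y)) =
     sgnf p a (y @ [l]) * power_int qvar (- form_wt B a (y @ [l]))"
proof -
  have fw: "form_wt B a (y @ [l]) = form_wt B a y + form_wt_letter B a l" by (simp add: form_wt_def)
  have pw: "power_int qvar (- form_wt B a (y @ [l])) = power_int qvar (- form_wt B a y) * power_int qvar (- form_wt_letter B a l)"
    unfolding fw using power_int_add[of qvar "- form_wt B a y" "- form_wt_letter B a l"] qvar_nz by simp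
  have nd: "nodd p (y @ [l]) = nodd p y + (if p l then 1 else 0)" by (simp add: nodd_def)
  show ?thesis unfolding pw coefw_def sgnf_def nd by (auto simp: algebra_simps)
qed

lemma pathE:
  fixes a :: "'i::linorder list"
  assumes ly: "lyndon a"
  shows "j < length a \<Longrightarrow> shuffle_word p B a (take j a) (a @ take j a) =
     sgnf p a (take j a) * power_int qvar (- form_wt B a (take j a))"
proof (induction j)
  case 0
  then show ?case by (simp add: sw_nil_right word_vec_def sgnf_def nodd_def form_wt_def)
next
  case (Suc j)
  have an: "a \<noteq> []" using ly by (simp add: lyndon_def)
  define l where "l = a!j"
  have tb: "take (Suc j) a = take j a @ [l]" using Suc.prems by (simp add: l_def take_Suc_conv_app_nth)
  have aa: "butlast a @ [last a] = a" using an by simp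
  have rec: "shuffle_word p B a (take (Suc j) a) (a @ take (Suc j) a) =
     (if l = last a then shuffle_word p B (butlast a) (take (Suc j) a) (a @ take j a) else 0) +
     (if l = l then coefw p B a l * shuffle_word p B a (take j a) (a @ take j a) else 0)"
    using sw_rec[of p B "butlast a" "last a" "take j a" l "a @ take j a" l] aa tb by simp
  have z: "(if l = last a then shuffle_word p B (butlast a) (take (Suc j) a) (a @ take j a) else 0) = 0"
  proof (cases "l = last a")
    case True
    show ?thesis
    proof (rule ccontr)
      assume "(if l = last a then shuffle_word p B (butlast a) (take (Suc j) a) (a @ take j a) else 0) \<noteq> 0"
      then have "shuffle_word p B (butlast a) (take (Suc j) a) (a @ take j a) \<noteq> 0" using True by simp
      then have sh: "a @ take j a \<in> shuffles (butlast a) (take (Suc j) a)" by (rule sw_supp)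
      have Ya: "take (Suc j) a \<le> a" using take_le_self by metis
      have Yne: "take (Suc j) a \<noteq> []" using tb by simp
      have X: "butlast a @ [l] = a" using aa True by simp
      have w: "(a @ take j a) @ [l] = a @ take (Suc j) a" using tb by simp
      have ta: "take (Suc j) a = a" using g2[OF ly Ya Yne X sh w] .
      then have "length (take (Suc j) a) = length a" by simp
      then show False using Suc.prems by simp
    qed
  qed simp
  have "shuffle_word p B a (take j a) (a @ take j a) =
     sgnf p a (take j a) * power_int qvar (- form_wt B a (take j a))" using Suc.IH Suc.prems by simp
  then show ?case using rec z step_formula[of p B a l "take j a"] tb by simp
qed

lemma pathF:
  fixes a :: "'i::linorder list"
  assumes ly: "lyndon a"
  shows "m < length a \<Longrightarrow> shuffle_word p B (take m a) a (a @ take m a) = 1"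
proof (induction m)
  case 0
  then show ?case by (simp add: sw_nil_left word_vec_def)
next
  case (Suc m)
  have an: "a \<noteq> []" using ly by (simp add: lyndon_def)
  define l where "l = a!m"
  have tb: "take (Suc m) a = take m a @ [l]" using Suc.prems by (simp add: l_def take_Suc_conv_app_nth)
  have aa: "butlast a @ [last a] = a" using an by simp
  have rec: "shuffle_word p B (take (Suc m) a) a (a @ take (Suc m) a) =
     (if l = l then shuffle_word p B (take m a) a (a @ take m a) else 0) +
     (if l = last a then coefw p B (take (Suc m) a) (last a) * shuffle_word p B (take (Suc m) a) (butlast a) (a @ take m a) else 0)"
    using sw_rec[of p B "take m a" l "butlast a" "last a" "a @ take m a" l] aa tb by simp
  have z: "(if l = last a then coefw p B (take (Suc m) a) (last a) * shuffle_word p B (take (Suc m) a) (butlast a) (a @ take m a) else 0) = 0"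
  proof (cases "l = last a")
    case True
    show ?thesis
    proof (rule ccontr)
      assume "(if l = last a then coefw p B (take (Suc m) a) (last a) * shuffle_word p B (take (Suc m) a) (butlast a) (a @ take m a) else 0) \<noteq> 0"
      then have "shuffle_word p B (take (Suc m) a) (butlast a) (a @ take m a) \<noteq> 0" using True by simp
      then have sh: "a @ take m a \<in> shuffles (take (Suc m) a) (butlast a)" by (rule sw_supp)
      then have sh': "a @ take m a \<in> shuffles (take (Suc m) a) (take (length a - 1) a)"
        by (simp add: butlast_conv_take)
      show False using g3[OF ly _ Suc.prems sh'] by simp
    qed
  qed simp
  show ?case using rec z Suc.IH Suc.prems by simp
qed

lemma sw_aa:
  fixes a :: "'i::linorder list"
  assumes ly: "lyndon a"
  shows "shuffle_word p B a a (a @ a) = 1 + sgnf p a a * power_int qvar (- form_wt B a a)"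
proof -
  have an: "a \<noteq> []" using ly by (simp add: lyndon_def)
  define l where "l = last a"
  have aa: "butlast a @ [l] = a" using an by (simp add: l_def)
  have rec: "shuffle_word p B a a (a @ a) =
     (if l = l then shuffle_word p B (butlast a) a (a @ butlast a) else 0) +
     (if l = l then coefw p B a l * shuffle_word p B a (butlast a) (a @ butlast a) else 0)"
    using sw_rec[of p B "butlast a" l "butlast a" l "a @ butlast a" l] aa
    by (metis append_assoc)
  have bl: "butlast a = take (length a - 1) a" by (simp add: butlast_conv_take)
  have l1: "length a - 1 < length a" using an by simp
  have F: "shuffle_word p B (butlast a) a (a @ butlast a) = 1" using pathF[OF ly l1] bl by simp
  have E: "shuffle_word p B a (butlast a) (a @ butlast a) =
      sgnf p a (butlast a) * power_int qvar (- form_wt B a (butlast a))" using pathE[OF ly l1] bl by simp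
  show ?thesis using rec F E step_formula[of p B a l "butlast a"] aa by simp
qed

lemma sw_ab_nz:
  fixes a b :: "'i::linorder list"
  assumes ly: "lyndon a" and ba: "b \<le> a" and iso: "isotropic_odd p B a \<longrightarrow> a \<noteq> b"
  shows "shuffle_word p B a b (a @ b) \<noteq> 0"
proof (cases "a = b")
  case False
  then show ?thesis using path1[OF ly ba, of "length b" p B] by simp
next
  case True
  then have ni: "\<not> (odd (nodd p a) \<and> form_wt B a a = 0)" using iso by (simp add: isotropic_odd_def)
  have e: "shuffle_word p B a b (a @ b) = 1 + sgnf p a a * power_int qvar (- form_wt B a a)"
    using sw_aa[OF ly, of p B] True by simp
  show ?thesis
  proof (cases "odd (nodd p a)")
    case True
    then have s: "sgnf p a a = -1" by (simp add: sgnf_def)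
    have "- form_wt B a a \<noteq> 0" using ni True by simp
    then have "power_int qvar (- form_wt B a a) \<noteq> 1" by (rule qpow_ne_one)
    then show ?thesis using e s by (simp add: add_eq_0_iff)
  next
    case False
    then have s: "sgnf p a a = 1" by (simp add: sgnf_def)
    have "power_int qvar (- form_wt B a a) \<noteq> -1" by (rule qpow_ne_minus_one)
    then show ?thesis using e s by (auto simp: add_eq_0_iff)
  qed
qed

theorem mainTheorem8:
  fixes p :: "'i::{linorder, finite} \<Rightarrow> bool"
    and B :: "'i \<Rightarrow> 'i \<Rightarrow> int"
    and wi wj :: "'i list"
  assumes "super_cartan_datum p B"
    and "dominant_lyndon p B wi"
    and "dominant p B wj"
    and "wi = wj \<or> word_less wj wi"
    and "isotropic_odd p B wi \<longrightarrow> wi \<noteq> wj"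
  shows "dominant p B (wi @ wj)"
proof -
  define a where "a = wi"
  define b where "b = wj"
  have ly: "lyndon a" using assms(2) by (simp add: dominant_lyndon_def a_def)
  obtain u where u: "u \<in> Ualg p B" "is_max_word u a"
    using assms(2) by (auto simp: dominant_lyndon_def dominant_def a_def)
  obtain v where v: "v \<in> Ualg p B" "is_max_word v b"
    using assms(3) by (auto simp: dominant_def b_def)
  have ba: "b \<le> a" using assms(4) by (auto simp: a_def b_def word_less_iff)
  have iso: "isotropic_odd p B a \<longrightarrow> a \<noteq> b" using assms(5) by (simp add: a_def b_def)
  have fu: "finite (supp u)" and ua: "u a \<noteq> 0" and hu: "\<And>x. u x \<noteq> 0 \<Longrightarrow> x \<le> a"
    using u(2) by (auto simp: is_max_word_def word_less_iff)
  have fv: "finite (supp v)" and vb: "v b \<noteq> 0" and hv: "\<And>y. v y \<noteq> 0 \<Longrightarrow> y \<le> b"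
    using v(2) by (auto simp: is_max_word_def word_less_iff)
  define f where "f = shuffle p B u v"
  have fU: "f \<in> Ualg p B" unfolding f_def by (rule Ualg.mult[OF u(1) v(1)])
  have key: "(w = a @ b \<and> x = a \<and> y = b) \<or> w < a @ b"
    if "x \<in> supp u" "y \<in> supp v" "shuffle_word p B x y w \<noteq> 0" for x y w
  proof -
    have "x \<le> a" using hu that(1) by (simp add: supp_def)
    moreover have "y \<le> b" using hv that(2) by (simp add: supp_def)
    moreover have "w \<in> shuffles x y" using sw_supp that(3) by blast
    ultimately show ?thesis using main_comb[OF ly _ _ ba] by blast
  qed
  have nzterm: "\<exists>x\<in>supp u. \<exists>y\<in>supp v. shuffle_word p B x y w \<noteq> 0" if "f w \<noteq> 0" for w
  proof -
    have "(\<Sum>x\<in>supp u. \<Sum>y\<in>supp v. u x * v y * shuffle_word p B x y w) \<noteq> 0"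
      using that by (simp add: f_def shuffle_def)
    then obtain x where x: "x \<in> supp u" "(\<Sum>y\<in>supp v. u x * v y * shuffle_word p B x y w) \<noteq> 0"
      by (rule sum.not_neutral_contains_not_neutral)
    from x(2) obtain y where y: "y \<in> supp v" "u x * v y * shuffle_word p B x y w \<noteq> 0"
      by (rule sum.not_neutral_contains_not_neutral)
    then show ?thesis using x by auto
  qed
  have fab: "f (a @ b) = u a * v b * shuffle_word p B a b (a @ b)"
  proof -
    have "f (a @ b) = (\<Sum>x\<in>supp u. \<Sum>y\<in>supp v. u x * v y * shuffle_word p B x y (a @ b))"
      by (simp add: f_def shuffle_def)
    also have "\<dots> = (\<Sum>x\<in>supp u. if x = a then (\<Sum>y\<in>supp v. if y = b then u a * v b * shuffle_word p B a b (a @ b) else 0) else 0)"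
    proof (rule sum.cong[OF refl])
      fix x assume x: "x \<in> supp u"
      show "(\<Sum>y\<in>supp v. u x * v y * shuffle_word p B x y (a @ b)) =
        (if x = a then (\<Sum>y\<in>supp v. if y = b then u a * v b * shuffle_word p B a b (a @ b) else 0) else 0)"
      proof -
        have "(\<Sum>y\<in>supp v. u x * v y * shuffle_word p B x y (a @ b)) =
          (\<Sum>y\<in>supp v. if x = a \<and> y = b then u a * v b * shuffle_word p B a b (a @ b) else 0)"
        proof (rule sum.cong[OF refl])
          fix y assume y: "y \<in> supp v"
          show "u x * v y * shuffle_word p B x y (a @ b) =
            (if x = a \<and> y = b then u a * v b * shuffle_word p B a b (a @ b) else 0)"
          proof (cases "x = a \<and> y = b")
            case True then show ?thesis by simp
          next
            case False
            have "shuffle_word p B x y (a @ b) = 0"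
            proof (rule ccontr)
              assume "shuffle_word p B x y (a @ b) \<noteq> 0"
              then have "(a @ b = a @ b \<and> x = a \<and> y = b) \<or> a @ b < a @ b" using key[OF x y] by blast
              then show False using False by simp
            qed
            then show ?thesis using False by auto
          qed
        qed
        then show ?thesis by (cases "x = a") auto
      qed
    qed
    also have "\<dots> = u a * v b * shuffle_word p B a b (a @ b)"
      using fu fv ua vb by (simp add: supp_def)
    finally show ?thesis .
  qed
  have fnz: "f (a @ b) \<noteq> 0" using fab ua vb sw_ab_nz[OF ly ba iso] by simp
  have fin: "finite (supp f)"
  proof -
    have "supp f \<subseteq> (\<Union>x\<in>supp u. \<Union>y\<in>supp v. supp (shuffle_word p B x y))"
      using nzterm by (auto simp: supp_def)
    moreover have "finite (\<Union>x\<in>supp u. \<Union>y\<in>supp v. supp (shuffle_word p B x y))"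
      using fu fv finite_supp_sw by blast
    ultimately show ?thesis using finite_subset by blast
  qed
  have mx: "\<forall>w. f w \<noteq> 0 \<longrightarrow> w = a @ b \<or> word_less w (a @ b)"
  proof (intro allI impI)
    fix w assume "f w \<noteq> 0"
    then obtain x y where "x \<in> supp u" "y \<in> supp v" "shuffle_word p B x y w \<noteq> 0" using nzterm by blast
    then show "w = a @ b \<or> word_less w (a @ b)" using key by (auto simp: word_less_iff)
  qed
  have "is_max_word f (a @ b)" unfolding is_max_word_def using fin fnz mx by blast
  moreover have "f \<noteq> (\<lambda>_. 0)" using fnz by auto
  ultimately show ?thesis unfolding dominant_def a_def b_def using fU by blast
qed

end
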